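(* Let $b\ge 1$, $k\ge 1$, $1\le s\le k$ be integers. Then $\sigma_{k}^{(b+1)}(t;s)=\sigma_{k}^{(b)}(t;s)$ for every integer $t$.
   Context: For a positive integer $m$, $(q)_m=(1-q)\cdots(1-q^m)$, $(q)_0=1$. For integers $b\ge 0$, $k\ge1$ and $1\le s\le k$, let $R^{(b)}_{k,s}(q)=\sum_{t=0}^{k-1}\sigma^{(b)}_k(t;s)q^t$ be the remainder of $\frac{1}{k^b}(q)_{k-1}^{\,b}(q)_{s-1}$ upon division by $1-q^k$; the values $\sigma^{(b)}_k(t;s)$ are extended to all integers $t$ by $k$-periodicity. *)

theory Defs
  imports "HOL-Computational_Algebra.Polynomial"
begin

definition qpoch :: "nat \<Rightarrow> rat poly" where
  "qpoch m = (\<Prod>i\<in>{1..m}. 1 - monom 1 i)"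

definition Rrem :: "nat \<Rightarrow> nat \<Rightarrow> nat \<Rightarrow> rat poly" where
  "Rrem b k s = (smult (1 / of_nat k ^ b) (qpoch (k - 1) ^ b * qpoch (s - 1))) mod (1 - monom 1 k)"

definition sigma :: "nat \<Rightarrow> nat \<Rightarrow> int \<Rightarrow> nat \<Rightarrow> rat" where
  "sigma b k t s = coeff (Rrem b k s) (nat (t mod int k))"

end

theory Submission
  imports Defs "HOL-Computational_Algebra.Computational_Algebra"
begin

abbreviation mr :: "rat poly \<Rightarrow> complex poly" where "mr \<equiv> map_poly of_rat"

lemma mr_add: "mr (a + b) = mr a + mr b"
  by (rule poly_eqI) (simp add: coeff_map_poly of_rat_add)

lemma mr_diff: "mr (a - b) = mr a - mr b"
  by (rule poly_eqI) (simp add: coeff_map_poly of_rat_diff)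

lemma mr_mult: "mr (a * b) = mr a * mr b"
  by (rule poly_eqI) (simp add: coeff_map_poly coeff_mult of_rat_sum of_rat_mult)

lemma mr_prod: "mr (\<Prod>i\<in>A. f i) = (\<Prod>i\<in>A. mr (f i))"
  by (induction A rule: infinite_finite_induct) (simp_all add: mr_mult)

lemma prod_roots_dvd:
  fixes F :: "'a::idom poly"
  assumes "finite S" "\<forall>z\<in>S. poly F z = 0"
  shows "(\<Prod>z\<in>S. [:-z,1:]) dvd F"
  using assms
proof (induction S arbitrary: F rule: finite_induct)
  case empty thus ?case by simp
next
  case (insert a S)
  have "[:-a,1:] dvd F" using insert.prems by (simp add: poly_eq_0_iff_dvd)
  then obtain g where g: "F = [:-a,1:] * g" by (elim dvdE)
  have "\<forall>z\<in>S. poly g z = 0"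
  proof
    fix z assume "z \<in> S"
    then have "z \<noteq> a" "poly F z = 0" using insert by auto
    then show "poly g z = 0" using g by simp
  qed
  then have "(\<Prod>z\<in>S. [:-z,1:]) dvd g" using insert.IH by blast
  then have "[:-a,1:] * (\<Prod>z\<in>S. [:-z,1:]) dvd [:-a,1:] * g" by (rule mult_dvd_mono[OF dvd_refl])
  then show ?case using g insert.hyps by (simp only: prod.insert[OF insert.hyps])
qed

lemma unity_decomp:
  assumes "k \<ge> 1"
  shows "(monom 1 k - 1 :: complex poly) = (\<Prod>z\<in>{z. z^k = 1}. [:-z,1:])"
proof -
  let ?M = "monom 1 k - 1 :: complex poly"
  have pM: "poly ?M z = z^k - 1" for z by (simp add: poly_monom)
  have dM: "pderiv ?M = monom (of_nat k) (k - 1)" by (simp add: pderiv_diff pderiv_monom)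
  have rs: "rsquarefree ?M"
    unfolding rsquarefree_roots
  proof (intro allI notI)
    fix a assume h: "poly ?M a = 0 \<and> poly (pderiv ?M) a = 0"
    then have "a^k = 1" using pM by simp
    then have "a \<noteq> 0" using assms by (cases k) auto
    moreover have "of_nat k * a^(k-1) = 0" using h dM by (simp add: poly_monom)
    ultimately show False using assms by simp
  qed
  have e: "?M = (-1) + monom 1 k" by simp
  have "lead_coeff ((-1) + monom 1 k :: complex poly) = 1"
    using assms by (subst lead_coeff_add_le) (auto simp: degree_monom_eq)
  then have lc: "lead_coeff ?M = 1" using e by metis
  have "smult (lead_coeff ?M) (\<Prod>z|poly ?M z = 0. [:-z, 1:]) = ?M"
    by (rule complex_poly_decompose_rsquarefree[OF rs])
  then show ?thesis using lc pM by simp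
qed


lemma complex_dvd:
  fixes F :: "complex poly"
  assumes "k \<ge> 1" "\<And>z. z^k = 1 \<Longrightarrow> poly F z = 0"
  shows "(1 - monom 1 k) dvd F"
proof -
  have fin: "finite {z::complex. z^k = 1}" using assms(1) by (intro finite_roots_unity) simp
  have "(\<Prod>z\<in>{z. z^k = 1}. [:-z,1:]) dvd F"
    using assms(2) by (intro prod_roots_dvd[OF fin]) auto
  then have "(monom 1 k - 1) dvd F" using unity_decomp[OF assms(1)] by simp
  moreover have "(1 - monom 1 k :: complex poly) = - (monom 1 k - 1)" by simp
  ultimately show ?thesis by (metis minus_dvd_iff)
qed

lemma prim_prod:
  fixes w :: complex
  assumes k: "k \<ge> 1" and wk: "w^k = 1" and nd: "\<forall>d\<in>{1..k-1}. w^d \<noteq> 1"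
  shows "(\<Prod>i\<in>{1..k-1}. 1 - w^i) = of_nat k"
proof -
  have w0: "w \<noteq> 0" using k wk by (cases k) auto
  have inj: "inj_on (\<lambda>i. w^i) {..<k}"
  proof (rule inj_onI)
    fix i j assume ij: "i \<in> {..<k}" "j \<in> {..<k}" "w^i = w^j"
    show "i = j"
    proof (rule ccontr)
      assume "i \<noteq> j"
      then consider "i < j" | "j < i" by linarith
      then show False
      proof cases
        case 1
        have "w^j = w^i * w^(j-i)" using 1 by (simp add: power_add[symmetric])
        then have "w^(j-i) = 1" using ij w0 by simp
        moreover have "j - i \<in> {1..k-1}" using 1 ij by auto
        ultimately show False using nd by blast
      next
        case 2
        have "w^i = w^j * w^(i-j)" using 2 by (simp add: power_add[symmetric])
        then have "w^(i-j) = 1" using ij w0 by simp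
        moreover have "i - j \<in> {1..k-1}" using 2 ij by auto
        ultimately show False using nd by blast
      qed
    qed
  qed
  have fin: "finite {z::complex. z^k = 1}" using k by (intro finite_roots_unity) simp
  have sub: "(\<lambda>i. w^i) ` {..<k} \<subseteq> {z. z^k = 1}"
  proof
    fix z assume "z \<in> (\<lambda>i. w^i) ` {..<k}"
    then obtain i where z: "z = w^i" by auto
    have "z^k = (w^k)^i" unfolding z by (metis power_mult mult.commute)
    then show "z \<in> {z. z^k = 1}" using wk by simp
  qed
  have "card ((\<lambda>i. w^i) ` {..<k}) = k" using card_image[OF inj] by simp
  also have "\<dots> = card {z::complex. z^k = 1}" using card_roots_unity_eq k by simp
  finally have U: "(\<lambda>i. w^i) ` {..<k} = {z. z^k = 1}"
    by (intro card_subset_eq[OF fin sub])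
  have "(monom 1 k - 1 :: complex poly) = (\<Prod>z\<in>{z. z^k = 1}. [:-z,1:])"
    by (rule unity_decomp[OF k])
  also have "\<dots> = (\<Prod>i<k. [:-(w^i),1:])"
    unfolding U[symmetric] by (subst prod.reindex[OF inj]) simp
  also have "{..<k} = insert 0 {1..k-1}" using k by auto
  also have "(\<Prod>i\<in>insert 0 {1..k-1}. [:-(w^i),1:]) = [:-1,1:] * (\<Prod>i\<in>{1..k-1}. [:-(w^i),1:])"
    by (subst prod.insert) auto
  finally have A: "(monom 1 k - 1 :: complex poly) = [:-1,1:] * (\<Prod>i\<in>{1..k-1}. [:-(w^i),1:])" .
  have B: "(monom 1 k - 1 :: complex poly) = [:-1,1:] * (\<Sum>i<k. [:0,1:]^i)"
  proof -
    have B0: "(monom 1 k - 1 :: complex poly) = ([:0,1:] - 1) * (\<Sum>i<k. [:0,1:]^i)"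
      using power_diff_1_eq[of "[:0,1::complex:]" k] by (simp add: monom_altdef)
    have "[:0,1::complex:] - 1 = [:-1,1:]" by (simp add: one_pCons)
    then show ?thesis using B0 by metis
  qed
  have "(\<Prod>i\<in>{1..k-1}. [:-(w^i),1:]) = (\<Sum>i<k. [:0,1::complex:]^i)"
    using A B by (metis mult_left_cancel pCons_eq_0_iff one_neq_zero)
  then have "poly (\<Prod>i\<in>{1..k-1}. [:-(w^i),1:]) 1 = poly (\<Sum>i<k. [:0,1::complex:]^i) 1" by simp
  then show ?thesis by (simp add: poly_prod poly_sum)
qed

lemma eval_key:
  fixes w :: complex
  assumes k: "k \<ge> 1" and wk: "w^k = 1"
  shows "(\<Prod>i\<in>{1..k-1}. 1 - w^i) * (\<Prod>i\<in>{1..k-1}. 1 - w^i) - of_nat k * (\<Prod>i\<in>{1..k-1}. 1 - w^i) = 0"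
proof (cases "\<exists>d\<in>{1..k-1}. w^d = 1")
  case True
  then have "(\<Prod>i\<in>{1..k-1}. 1 - w^i) = 0" by (auto simp: prod_zero_iff)
  then show ?thesis by simp
next
  case False
  then show ?thesis using prim_prod[OF k wk] by auto
qed


lemma mr_smult: "mr (smult c p) = smult (of_rat c) (mr p)"
  by (rule poly_eqI) (simp add: coeff_map_poly of_rat_mult)

lemma mr_monom: "mr (monom 1 i) = monom 1 i"
  by (simp add: map_poly_monom)

lemma poly_mr_qpoch: "poly (mr (qpoch m)) z = (\<Prod>i\<in>{1..m}. 1 - z^i)"
  unfolding qpoch_def mr_prod by (simp add: mr_diff mr_monom poly_prod poly_monom)

lemma rat_key:
  assumes k: "k \<ge> 1"
  shows "(1 - monom 1 k :: rat poly) dvd qpoch (k-1) * qpoch (k-1) - smult (of_nat k) (qpoch (k-1))"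
proof -
  define M :: "rat poly" where "M = 1 - monom 1 k"
  define D where "D = qpoch (k-1) * qpoch (k-1) - smult (of_nat k) (qpoch (k-1))"
  define r where "r = D mod M"
  have mM: "mr M = 1 - monom 1 k" unfolding M_def by (simp add: mr_diff mr_monom)
  have M0: "M \<noteq> 0"
  proof
    assume "M = 0"
    then have "poly M 0 = 0" by simp
    then show False using k unfolding M_def by (cases k) (simp_all add: poly_monom)
  qed
  have "mr M dvd mr D"
    unfolding mM
  proof (rule complex_dvd[OF k])
    fix z :: complex assume "z^k = 1"
    then show "poly (mr D) z = 0"
      unfolding D_def using eval_key[OF k, of z]
      by (simp add: mr_diff mr_mult mr_smult poly_mr_qpoch)
  qed
  moreover have "mr D = mr M * mr (D div M) + mr r"
    unfolding r_def by (metis div_mult_mod_eq mr_add mr_mult mult.commute)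
  ultimately have dr: "mr M dvd mr r" by (metis dvd_add_right_iff dvd_triv_left)
  have "r = 0"
  proof (rule ccontr)
    assume r0: "r \<noteq> 0"
    have dg: "degree r < degree M" using degree_mod_less'[OF M0] r0 unfolding r_def by blast
    have "mr r \<noteq> 0" using r0 by (simp add: map_poly_eq_0_iff)
    then have "degree (mr M) \<le> degree (mr r)" using dr dvd_imp_degree_le by blast
    then show False using dg by (simp add: degree_map_poly)
  qed
  then show ?thesis unfolding r_def D_def M_def by (simp add: mod_eq_0_iff_dvd)
qed

theorem corollary2p7:
  fixes b k s :: nat and t :: int
  assumes "b \<ge> 1" and "k \<ge> 1" and "1 \<le> s" and "s \<le> k"
  shows "sigma (b + 1) k t s = sigma b k t s"
proof -
  define p where "p = qpoch (k-1)"
  define Q where "Q = qpoch (s-1)"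
  define M :: "rat poly" where "M = 1 - monom 1 k"
  have kd: "M dvd p * p - smult (of_nat k) p" unfolding M_def p_def by (rule rat_key[OF assms(2)])
  have kne: "(of_nat k :: rat) \<noteq> 0" using assms(2) by simp
  have bb: "b + 1 = (b - 1) + 2" "b = (b - 1) + 1" using assms(1) by auto
  have eq: "smult (1 / of_nat k ^ (b+1)) (p ^ (b+1) * Q) - smult (1 / of_nat k ^ b) (p ^ b * Q)
      = smult (1 / of_nat k ^ (b+1)) (p ^ (b-1) * Q * (p * p - smult (of_nat k) p))"
  proof -
    have "smult (1 / of_nat k ^ b) (p ^ b * Q) = smult (1 / of_nat k ^ (b+1)) (smult (of_nat k) (p ^ b * Q))"
      using kne by (simp add: field_simps)
    moreover have "p ^ (b+1) * Q - smult (of_nat k) (p ^ b * Q) = p ^ (b-1) * Q * (p * p - smult (of_nat k) p)"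
      apply (subst (1 2) bb)
      by (simp add: algebra_simps power_add power2_eq_square)
    ultimately show ?thesis by (metis smult_diff_right)
  qed
  have "M dvd smult (1 / of_nat k ^ (b+1)) (p ^ (b+1) * Q) - smult (1 / of_nat k ^ b) (p ^ b * Q)"
    unfolding eq by (intro dvd_smult dvd_mult kd)
  then have "Rrem (b+1) k s = Rrem b k s"
    unfolding Rrem_def p_def Q_def M_def by (simp add: mod_eq_dvd_iff)
  then show ?thesis unfolding sigma_def by simp
qed

end
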